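(* Let $q\ge2$ be a prime power, $d\ge6$, $2\le j\le d$ and $1\le i\le d-3$, and let $h_{\max}=\min\{j,d-i\}$. Then $$|Q_j(i)-T_{h_{\max}}(i,j)|\le\begin{cases}|T_0(i,j)|+|T_1(i,j)|+\dots+|T_{j-1}(i,j)|, & \text{if } j\le d-i-1,\\ |T_{d-i-2}(i,j)|+|T_{d-i-1}(i,j)|, & \text{if } j\ge d-i.\end{cases}$$
   Context: Let $b=-q$. For integers $m\ge0$ and $l$, ${m\brack l}_b=\prod_{t=1}^{l}\frac{b^{m-t+1}-1}{b^t-1}$ for $l\ge0$ and $0$ for $l<0$. For $0\le i,j\le d$, $$Q_j(i)=\sum_{h=0}^{\min\{j,d-i\}}(-1)^j(-q)^{\binom{j-h}{2}+hd}{d-h\brack d-j}_b{d-i\brack h}_b,$$ the eigenvalues of the Hermitian forms graph $Q_q(d,j)$. $T_h(i,j)$ denotes the $h$-th summand (including the factor $(-1)^j$). *)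

theory Defs
  imports "HOL-Analysis.Analysis" "HOL-Computational_Algebra.Primes"
begin

definition prime_power :: "nat \<Rightarrow> bool" where
  "prime_power q \<longleftrightarrow> (\<exists>p k. prime p \<and> k \<ge> 1 \<and> q = p ^ k)"

definition gbin :: "real \<Rightarrow> nat \<Rightarrow> int \<Rightarrow> real" where
  "gbin b m l = (if l < 0 then 0
     else (\<Prod>t = 1..nat l. (b ^ (m + 1 - t) - 1) / (b ^ t - 1)))"

(* h-th summand T_h(i,j) of Q_j(i), including the factor (-1)^j; b = -q *)
definition Tsum :: "nat \<Rightarrow> nat \<Rightarrow> nat \<Rightarrow> nat \<Rightarrow> nat \<Rightarrow> real" where
  "Tsum q d i j h = (-1) ^ j * (- real q) ^ (((j - h) choose 2) + h * d)
      * gbin (- real q) (d - h) (int d - int j) * gbin (- real q) (d - i) (int h)"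

definition Qeig :: "nat \<Rightarrow> nat \<Rightarrow> nat \<Rightarrow> nat \<Rightarrow> real" where
  "Qeig q d i j = (\<Sum>h = 0..min j (d - i). Tsum q d i j h)"

end

theory Submission
  imports Defs
begin

lemma P_shift:
  fixes b :: real
  shows "s \<le> m \<Longrightarrow> (\<Prod>t=1..s. b^(m+1-t) - 1) * (b^(m+1) - 1)
        = (\<Prod>t=1..s. b^(m+2-t) - 1) * (b^(m+1-s) - 1)"
proof (induction s)
  case 0 then show ?case by simp
next
  case (Suc s)
  then have IH: "(\<Prod>t=1..s. b^(m+1-t) - 1) * (b^(m+1) - 1)
        = (\<Prod>t=1..s. b^(m+2-t) - 1) * (b^(m+1-s) - 1)" by simp
  have e1: "m + 1 - Suc s = m - s" "m + 2 - Suc s = m + 1 - s" by auto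
  have "(\<Prod>t=1..Suc s. b^(m+1-t) - 1) * (b^(m+1) - 1)
      = ((\<Prod>t=1..s. b^(m+1-t) - 1) * (b^(m+1) - 1)) * (b^(m - s) - 1)"
    by (simp add: prod.cl_ivl_Suc e1)
  also have "\<dots> = (\<Prod>t=1..s. b^(m+2-t) - 1) * (b^(m+1-s) - 1) * (b^(m - s) - 1)"
    using IH by simp
  also have "\<dots> = (\<Prod>t=1..Suc s. b^(m+2-t) - 1) * (b^(m+1 - Suc s) - 1)"
    by (simp add: prod.cl_ivl_Suc e1)
  finally show ?case .
qed

lemma gbin_shift:
  fixes b :: real
  assumes "s \<le> m"
  shows "gbin b m (int s) * (b^(m+1) - 1) = gbin b (m+1) (int s) * (b^(m+1-s) - 1)"
proof -
  have "(\<Prod>t=1..s. (b^(m+1-t) - 1) / (b^t - 1)) = (\<Prod>t=1..s. b^(m+1-t) - 1) / (\<Prod>t=1..s. b^t - 1)"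
    by (simp add: prod_dividef)
  moreover have "(\<Prod>t=1..s. (b^(m+1+1-t) - 1) / (b^t - 1)) = (\<Prod>t=1..s. b^(m+2-t) - 1) / (\<Prod>t=1..s. b^t - 1)"
    by (simp add: prod_dividef)
  ultimately show ?thesis using P_shift[OF assms, of b]
    unfolding gbin_def by (simp add: field_simps)
qed

lemma bpow_ne1:
  assumes "q \<ge> 2" "k \<ge> 1"
  shows "(- real q)^k - 1 \<noteq> 0"
proof
  assume "(- real q)^k - 1 = 0"
  then have "\<bar>(- real q)^k\<bar> = 1" by simp
  moreover have "\<bar>(- real q)^k\<bar> = real q ^ k" by (simp add: power_abs)
  moreover have "real q ^ k \<ge> real q ^ 1" using assms by (intro power_increasing) auto
  ultimately show False using assms by simp
qed

lemma gbin_step: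
  fixes b :: real
  assumes "b^(h+1) - 1 \<noteq> 0"
  shows "gbin b n (int (Suc h)) * (b^(h+1) - 1) = gbin b n (int h) * (b^(n - h) - 1)"
proof -
  have e: "n + 1 - Suc h = n - h" by simp
  have "gbin b n (int (Suc h)) = (\<Prod>t = 1..Suc h. (b ^ (n + 1 - t) - 1) / (b ^ t - 1))"
    unfolding gbin_def nat_int by simp
  also have "\<dots> = (\<Prod>t = 1..h. (b ^ (n + 1 - t) - 1) / (b ^ t - 1)) * ((b^(n-h) - 1) / (b^(Suc h) - 1))"
    by (simp add: prod.cl_ivl_Suc e)
  finally show ?thesis using assms unfolding gbin_def by simp
qed

lemma alg:
  fixes a1 a0 b1 b0 x y z w a e f :: real
  assumes "a1 * x = a0 * y" "b1 * z = b0 * w"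
  shows "a * (e * f) * a1 * b1 * (x * z) = a * e * a0 * b0 * (f * y * w)"
proof -
  have "a * (e * f) * a1 * b1 * (x * z) = a * e * f * (a1 * x) * (b1 * z)" by (simp add: ac_simps)
  also have "\<dots> = a * e * f * (a0 * y) * (b0 * w)" using assms by simp
  finally show ?thesis by (simp add: ac_simps)
qed

lemma T_rec:
  assumes q: "q \<ge> 2" and "j \<le> d" "h < j" "h < n" "n = d - i"
  shows "Tsum q d i j (Suc h) * (((- real q)^(d-h) - 1) * ((- real q)^(h+1) - 1))
       = Tsum q d i j h * ((- real q)^(d-j+h+1) * ((- real q)^(j-h) - 1) * ((- real q)^(n-h) - 1))"
proof -
  define b where "b = - real q"
  define s where "s = d - j"
  define m where "m = d - Suc h"
  have dh: "d - h = m + 1" "d - Suc h = m" using assms unfolding m_def by auto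
  have sm: "s \<le> m" using assms unfolding s_def m_def by auto
  have ms: "m + 1 - s = j - h" using assms unfolding s_def m_def by auto
  have l: "int d - int j = int s" using assms unfolding s_def by auto
  have G1: "gbin b (d - Suc h) (int s) * (b^(d-h) - 1) = gbin b (d - h) (int s) * (b^(j-h) - 1)"
    using gbin_shift[OF sm, of b] dh ms by simp
  have ne: "b^(h+1) - 1 \<noteq> 0" using bpow_ne1[OF q, of "h+1"] unfolding b_def by simp
  have G2: "gbin b (d - i) (int (Suc h)) * (b^(h+1) - 1) = gbin b (d-i) (int h) * (b^(n - h) - 1)"
    using gbin_step[OF ne, of "d-i"] assms by simp
  have ch: "((j - h) choose 2) = ((j - Suc h) choose 2) + (j - Suc h)"
  proof -
    have jh: "j - h = Suc (j - Suc h)" using assms by auto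
    have kk: "\<And>k::nat. (Suc k) choose 2 = (k choose 2) + k" by (subst numeral_2_eq_2, subst binomial_Suc_Suc, simp add: numeral_2_eq_2)
    show ?thesis using kk[of "j - Suc h"] jh by simp
  qed
  have ex: "((j - h) choose 2) + h * d + (d - j + h + 1) = ((j - Suc h) choose 2) + Suc h * d"
    using ch assms by auto
  have pw: "b ^ (((j - Suc h) choose 2) + Suc h * d) = b ^ (((j - h) choose 2) + h * d) * b^(d-j+h+1)"
    unfolding ex[symmetric] by (simp only: power_add mult.assoc)
  show ?thesis
    unfolding Tsum_def b_def[symmetric] l
    apply (simp only: pw)
    by (rule alg[OF G1 G2])
qed

lemma abs_bk:
  fixes q k :: nat
  shows "\<bar>(- real q)^k - 1\<bar> \<ge> real q ^ k - 1" "\<bar>(- real q)^k - 1\<bar> \<le> real q ^ k + 1"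
proof -
  have "\<bar>(- real q)^k\<bar> = real q ^ k" by (simp add: power_abs)
  then show "\<bar>(- real q)^k - 1\<bar> \<ge> real q ^ k - 1" "\<bar>(- real q)^k - 1\<bar> \<le> real q ^ k + 1"
    by linarith+
qed

lemma qpow_ge:
  fixes q k m :: nat
  assumes "q \<ge> 2" "k \<ge> m"
  shows "real q ^ k \<ge> 2 ^ m"
proof -
  have "(2::real) ^ m \<le> 2 ^ k" using assms by (intro power_increasing) auto
  also have "\<dots> \<le> real q ^ k" using assms by (intro power_mono) auto
  finally show ?thesis .
qed

lemma T_grow:
  assumes q: "q \<ge> 2" and "j \<le> d" "n \<le> j" "h + 3 \<le> n" "n = d - i"
  shows "2 * \<bar>Tsum q d i j h\<bar> \<le> \<bar>Tsum q d i j (Suc h)\<bar>"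
proof -
  define b where "b = - real q"
  define D where "D = (b^(d-h) - 1) * (b^(h+1) - 1)"
  define N where "N = b^(d-j+h+1) * (b^(j-h) - 1) * (b^(n-h) - 1)"
  have rec: "Tsum q d i j (Suc h) * D = Tsum q d i j h * N"
    using T_rec[OF q, of j d h n i] assms unfolding D_def N_def b_def by auto
  define a where "a = real q ^ (d-j+h+1)"
  define B where "B = real q ^ (j-h)"
  define C where "C = real q ^ (n-h)"
  define X where "X = real q ^ (h+1)"
  define Y where "Y = real q ^ (d-h)"
  have aB: "a * B = Y * X" unfolding a_def B_def X_def Y_def power_add[symmetric]
    using assms by (intro arg_cong[where f="\<lambda>k. real q ^ k"]) auto
  have B8: "B \<ge> 8" unfolding B_def using qpow_ge[OF q, of 3 "j-h"] assms by auto
  have C8: "C \<ge> 8" unfolding C_def using qpow_ge[OF q, of 3 "n-h"] assms by auto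
  have X2: "X \<ge> 2" unfolding X_def using qpow_ge[OF q, of 1 "h+1"] assms by auto
  have Y8: "Y \<ge> 8" unfolding Y_def using qpow_ge[OF q, of 3 "d-h"] assms by auto
  have a0: "a \<ge> 0" unfolding a_def by simp
  have absN: "\<bar>N\<bar> = a * \<bar>b^(j-h) - 1\<bar> * \<bar>b^(n-h) - 1\<bar>"
    unfolding N_def a_def b_def by (simp add: abs_mult power_abs)
  have N1: "\<bar>b^(j-h) - 1\<bar> \<ge> B - 1" "\<bar>b^(n-h) - 1\<bar> \<ge> C - 1"
    unfolding b_def B_def C_def by (rule abs_bk)+
  have D1: "\<bar>b^(d-h) - 1\<bar> \<le> Y + 1" "\<bar>b^(h+1) - 1\<bar> \<le> X + 1"
    unfolding b_def Y_def X_def by (rule abs_bk)+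
  have "\<bar>N\<bar> \<ge> a * (B - 1) * (C - 1)"
    unfolding absN using N1 a0 B8 C8
    by (intro mult_mono) (auto intro: mult_left_mono)
  moreover have "a * (B - 1) * (C - 1) \<ge> a * (B - 1) * 7"
    using a0 B8 C8 by (intro mult_left_mono) auto
  moreover have "a * (B - 1) \<ge> a * (7 * B / 8)" using a0 B8 by (intro mult_left_mono) auto
  ultimately have Nl: "\<bar>N\<bar> \<ge> 49 / 8 * (Y * X)" using aB by (simp add: algebra_simps)
  have "\<bar>D\<bar> \<le> (Y + 1) * (X + 1)"
    unfolding D_def abs_mult using D1 by (intro mult_mono) auto
  moreover have "Y * 2 \<le> Y * X" using X2 Y8 by (intro mult_left_mono) auto
  moreover have "X * 8 \<le> X * Y" using X2 Y8 by (intro mult_left_mono) auto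
  moreover have "2 * 8 \<le> X * Y" using X2 Y8 by (intro mult_mono) auto
  ultimately have Du: "\<bar>D\<bar> \<le> 27 / 16 * (Y * X)" by (simp add: algebra_simps)
  have XY: "Y * X > 0" using X2 Y8 by simp
  have ND: "2 * \<bar>D\<bar> \<le> \<bar>N\<bar>" using Nl Du XY by linarith
  have Dne: "\<bar>D\<bar> > 0" unfolding D_def b_def using bpow_ne1[OF q, of "d-h"] bpow_ne1[OF q, of "h+1"] assms
    by auto
  have "\<bar>Tsum q d i j (Suc h)\<bar> * \<bar>D\<bar> = \<bar>Tsum q d i j h\<bar> * \<bar>N\<bar>"
    using rec by (metis abs_mult)
  also have "\<dots> \<ge> \<bar>Tsum q d i j h\<bar> * (2 * \<bar>D\<bar>)" using ND by (intro mult_left_mono) auto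
  finally have "(2 * \<bar>Tsum q d i j h\<bar>) * \<bar>D\<bar> \<le> \<bar>Tsum q d i j (Suc h)\<bar> * \<bar>D\<bar>" by (simp add: ac_simps)
  then show ?thesis using Dne by (simp add: mult_le_cancel_right)
qed

lemma sgn_b:
  assumes "q \<ge> 2" "k \<ge> 1"
  shows "((- real q)^k - 1) * (-1)^k > 0" "(- real q)^k * (-1)^k > 0"
proof -
  have e: "(- real q)^k * (-1)^k = real q ^ k" by (simp flip: power_mult_distrib)
  have q_pos: "real q > 0" using assms by simp
  have "real q ^ k \<ge> 2" using qpow_ge[OF assms(1), of 1 k] assms by auto
  moreover have f: "((- real q)^k - 1) * (-1)^k = real q ^ k - (-1)^k" using e by (simp add: algebra_simps)
  moreover have "(-1::real)^k \<le> 1" by (cases "even k") auto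
  ultimately show "((- real q)^k - 1) * (-1)^k > 0" unfolding f by linarith
  show "(- real q)^k * (-1)^k > 0" unfolding e using q_pos by simp
qed

lemma T_sign:
  assumes q: "q \<ge> 2" and "j \<le> d" "n \<le> j" "h + 3 = n" "n = d - i"
  shows "Tsum q d i j (Suc h) * Tsum q d i j h \<le> 0"
proof -
  define b where "b = - real q"
  define D where "D = (b^(d-h) - 1) * (b^(h+1) - 1)"
  define N where "N = b^(d-j+h+1) * (b^(j-h) - 1) * (b^(n-h) - 1)"
  have rec: "Tsum q d i j (Suc h) * D = Tsum q d i j h * N"
    using T_rec[OF q, of j d h n i] assms unfolding D_def N_def b_def by auto
  define E where "E = (d-j+h+1)+(j-h)+(n-h)+(d-h)+(h+1)"
  have "E = 2*d + 5" unfolding E_def using assms by auto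
  then have sE: "(-1::real)^E = -1" by simp
  have "(N * D) * (-1)^E = (b^(d-j+h+1) * (-1)^(d-j+h+1)) * ((b^(j-h) - 1) * (-1)^(j-h))
      * ((b^(n-h) - 1) * (-1)^(n-h)) * ((b^(d-h) - 1) * (-1)^(d-h)) * ((b^(h+1) - 1) * (-1)^(h+1))"
    unfolding N_def D_def E_def power_add by (simp add: ac_simps)
  also have "\<dots> > 0" unfolding b_def using assms
    by (intro mult_pos_pos sgn_b[OF q]; simp)
  finally have ND: "N * D < 0" using sE by simp
  have Dne: "D \<noteq> 0" unfolding D_def b_def using bpow_ne1[OF q, of "d-h"] bpow_ne1[OF q, of "h+1"] assms
    by auto
  define T1 where "T1 = Tsum q d i j (Suc h)"
  define T0 where "T0 = Tsum q d i j h"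
  have "T1 * T0 * (D * D) = (T0 * T0) * (N * D)" using rec unfolding T1_def T0_def
    by (metis mult.assoc mult.commute)
  also have "\<dots> \<le> 0" using ND mult_nonneg_nonpos[of "T0*T0" "N*D"] by auto
  finally have *: "T1 * T0 * (D * D) \<le> 0" .
  have "D * D > 0" using Dne by (simp add: zero_less_mult_iff) linarith
  then show ?thesis using * unfolding T1_def[symmetric] T0_def[symmetric]
    by (simp add: mult_le_0_iff zero_less_mult_iff) (metis mult_pos_pos not_less)
qed

lemma geo:
  fixes f :: "nat \<Rightarrow> real"
  shows "(\<forall>h<m. 2 * \<bar>f h\<bar> \<le> \<bar>f (Suc h)\<bar>) \<Longrightarrow> (\<Sum>h<m. \<bar>f h\<bar>) \<le> \<bar>f m\<bar>"
proof (induction m)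
  case 0 then show ?case by simp
next
  case (Suc m)
  then have "(\<Sum>h<m. \<bar>f h\<bar>) \<le> \<bar>f m\<bar>" by simp
  moreover have "2 * \<bar>f m\<bar> \<le> \<bar>f (Suc m)\<bar>" using Suc.prems by simp
  ultimately show ?case by simp
qed


lemma final_ineq:
  fixes S Tm T2 T1 :: real
  assumes "\<bar>S\<bar> \<le> \<bar>Tm\<bar>" "2 * \<bar>Tm\<bar> \<le> \<bar>T2\<bar>" "T2 * Tm \<le> 0"
  shows "\<bar>S + Tm + T2 + T1\<bar> \<le> \<bar>T2\<bar> + \<bar>T1\<bar>"
proof (cases "T2 \<ge> 0")
  case True
  then have "Tm \<le> 0 \<or> T2 = 0" using assms(3) by (metis mult_pos_pos not_le order_le_less)
  then show ?thesis using assms True by (auto simp: abs_if split: if_splits)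
next
  case False
  then have "Tm \<ge> 0" using assms(3) by (metis mult_neg_neg not_le)
  then show ?thesis using assms False by (auto simp: abs_if split: if_splits)
qed

theorem lemma5p3:
  fixes q d i j :: nat
  assumes "prime_power q" and "q \<ge> 2" and "d \<ge> 6"
    and "2 \<le> j" and "j \<le> d" and "1 \<le> i" and "i \<le> d - 3"
  shows "\<bar>Qeig q d i j - Tsum q d i j (min j (d - i))\<bar> \<le>
    (if j \<le> d - i - 1 then (\<Sum>h = 0..<j. \<bar>Tsum q d i j h\<bar>)
     else \<bar>Tsum q d i j (d - i - 2)\<bar> + \<bar>Tsum q d i j (d - i - 1)\<bar>)"
proof -
  define n where "n = d - i"
  define T where "T = Tsum q d i j"
  have Q: "Qeig q d i j = (\<Sum>h<min j n. T h) + T (min j n)"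
    unfolding Qeig_def T_def n_def atLeast0AtMost lessThan_Suc_atMost[symmetric] by simp
  show ?thesis
  proof (cases "j \<le> d - i - 1")
    case True
    then have mj: "min j n = j" unfolding n_def by auto
    show ?thesis using True unfolding Q mj T_def[symmetric] n_def[symmetric] atLeast0LessThan
      by (simp add: sum_abs)
  next
    case False
    have n3: "n \<ge> 3" unfolding n_def using assms by auto
    have mn: "min j n = n" using False unfolding n_def by auto
    define m where "m = n - 3"
    have nm: "n = Suc (Suc (Suc m))" unfolding m_def using n3 by auto
    have jn: "n \<le> j" using False unfolding n_def by auto
    have S: "(\<Sum>h<n. T h) = (\<Sum>h<m. T h) + T m + T (Suc m) + T (Suc (Suc m))"
      unfolding nm by simp
    have g: "\<forall>h<m. 2 * \<bar>T h\<bar> \<le> \<bar>T (Suc h)\<bar>"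
      using T_grow[OF assms(2) assms(5) jn _ n_def] nm unfolding T_def by auto
    have a1: "\<bar>\<Sum>h<m. T h\<bar> \<le> \<bar>T m\<bar>"
      using geo[OF g] sum_abs[of T "{..<m}"] by linarith
    have a2: "2 * \<bar>T m\<bar> \<le> \<bar>T (Suc m)\<bar>"
      using T_grow[OF assms(2) assms(5) jn _ n_def, of m] nm unfolding T_def by auto
    have a3: "T (Suc m) * T m \<le> 0"
      using T_sign[OF assms(2) assms(5) jn _ n_def, of m] nm unfolding T_def by auto
    have e1: "d - i - 2 = Suc m" "d - i - 1 = Suc (Suc m)" using nm unfolding n_def by auto
    show ?thesis using False final_ineq[OF a1 a2 a3, of "T (Suc (Suc m))"]
      unfolding Q mn S e1 T_def[symmetric] using mn unfolding n_def by simp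
  qed
qed

end
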